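(* Let $T:\mathcal{S}_n\to\mathcal{S}_n$ be a bijective isometry with respect to the Hausdorff distance, and let $(K_0,K_1)$ be an $\mathcal{S}_n$-cute pair. Then $(TK_0,TK_1)$ is an $\mathcal{S}_n$-cute pair, and moreover $T\left(\tfrac12 K_0+\tfrac12 K_1\right)=\tfrac12\left(T(K_0)+T(K_1)\right)$.
   Context: Convex bodies are compact convex non-empty subsets of $\mathbb{R}^n$; $B_2^n$ is the closed Euclidean unit ball; $\delta$ is the Hausdorff distance $\delta(K_0,K_1)=\inf\{\lambda>0: K_0\subseteq K_1+\lambda B_2^n,\ K_1\subseteq K_0+\lambda B_2^n\}$. $\mathcal{S}_n$ is the set of convex bodies in $\mathbb{R}^n$ which are intersections of Euclidean unit balls. A pair $(K_0,K_1)\in\mathcal{S}_n\times\mathcal{S}_n$ is called $\mathcal{S}_n$-cute if $M=\frac{K_0+K_1}{2}$ (Minkowski average, which lies in $\mathcal{S}_n$) is the unique body in $\mathcal{S}_n$ satisfying $\delta(K_0,M)=\frac12\delta(K_0,K_1)$ and $\delta(K_1,M)=\frac12\delta(K_0,K_1)$. *)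

theory Defs
  imports "HOL-Analysis.Analysis"
begin

definition convex_body :: "'a::euclidean_space set \<Rightarrow> bool" where
  "convex_body K \<longleftrightarrow> compact K \<and> convex K \<and> K \<noteq> {}"

definition ball_bodies :: "'a::euclidean_space set set" where
  "ball_bodies = {K. convex_body K \<and> (\<exists>X. K = (\<Inter>x\<in>X. cball x 1))}"

definition mink_avg :: "'a::euclidean_space set \<Rightarrow> 'a set \<Rightarrow> 'a set" where
  "mink_avg K0 K1 = (\<lambda>z. (1/2::real) *\<^sub>R z) ` {a + b | a b. a \<in> K0 \<and> b \<in> K1}"

definition hausdorff_distance :: "'a::euclidean_space set \<Rightarrow> 'a set \<Rightarrow> real" where
  "hausdorff_distance K0 K1 = Inf {r::real. r > 0 \<and>
     K0 \<subseteq> {a + b | a b. a \<in> K1 \<and> b \<in> cball 0 r} \<and>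
     K1 \<subseteq> {a + b | a b. a \<in> K0 \<and> b \<in> cball 0 r}}"

definition cute_pair :: "'a::euclidean_space set \<Rightarrow> 'a set \<Rightarrow> bool" where
  "cute_pair K0 K1 \<longleftrightarrow> K0 \<in> ball_bodies \<and> K1 \<in> ball_bodies \<and>
     (\<forall>M\<in>ball_bodies.
        (hausdorff_distance K0 M = hausdorff_distance K0 K1 / 2 \<and>
         hausdorff_distance K1 M = hausdorff_distance K0 K1 / 2)
        \<longleftrightarrow> M = mink_avg K0 K1)"

end

theory Submission
  imports Defs
begin

lemma norm_sq_diff: fixes v u :: "'a::real_inner"
  shows "norm (v - sv *\<^sub>R u)^2 = norm v ^2 - 2 * sv * (inner v u) + sv^2 * norm u ^2"
  unfolding power2_norm_eq_inner by (simp add: inner_diff_left inner_diff_right inner_commute algebra_simps power2_eq_square)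

lemma norm_sq_comb: fixes c w :: "'a::real_inner"
  shows "norm (c - l *\<^sub>R w)^2 = (1-l)*norm c^2 + l * norm (c - w)^2 - l*(1-l)*norm w^2"
  unfolding power2_norm_eq_inner by (simp add: inner_diff_left inner_diff_right inner_commute algebra_simps power2_eq_square)

lemma supp_ball:
  fixes X :: "'a::euclidean_space set"
  assumes K: "K = (\<Inter>x\<in>X. cball x 1)" and k: "k \<in> K"
    and mx: "\<forall>y\<in>K. inner y u \<le> inner k u" and u: "norm u = 1"
  shows "K \<subseteq> cball (k - u) 1"
proof
  fix y assume y: "y \<in> K"
  show "y \<in> cball (k - u) 1"
  proof (rule ccontr)
    assume "y \<notin> cball (k - u) 1"
    define w where "w = y - k"
    have "dist (k - u) y = norm (w + u)" unfolding w_def dist_norm by (metis norm_minus_commute diff_diff_eq2 diff_add_eq add.commute)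
    with \<open>y \<notin> cball (k - u) 1\<close> have n1: "norm (w + u) > 1" by simp
    have "norm (w+u)^2 = norm w^2 + 2 * inner w u + 1"
    proof -
      have "inner u u = 1" using u by (simp add: norm_eq_1)
      thus ?thesis unfolding power2_norm_eq_inner by (simp add: inner_add_left inner_add_right inner_commute algebra_simps)
    qed
    moreover have "norm (w+u)^2 > 1" using n1 by (simp add: one_less_power)
    ultimately have pos: "norm w^2 + 2 * inner w u > 0" by simp
    have wu: "inner w u \<le> 0"
    proof (rule ccontr)
      assume "\<not> inner w u \<le> 0"
      then have "inner y u > inner k u" unfolding w_def by (simp add: inner_diff_left)
      with mx y show False by force
    qed
    define g where "g = - inner w u"
    define a where "a = norm w ^2"
    define A where "A = a/2 - g"
    define P where "P = (2*g+a)^2/16 + a + A"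
    have g0: "g \<ge> 0" using wu g_def by simp
    have A0: "A > 0" using pos unfolding A_def a_def g_def by simp
    have a0: "a > 0" using A0 g0 unfolding A_def by simp
    have PA: "P > A" proof -
      have "(2*g+a)^2/16 \<ge> 0" by simp
      thus ?thesis unfolding P_def using a0 by linarith
    qed
    have P0: "P > 0" using PA A0 by simp
    define l where "l = A / P"
    have l0: "l > 0" using A0 P0 l_def by simp
    have l1: "l < 1" using PA P0 l_def by simp
    have lP: "l * P = A" using P0 l_def by simp
    define sv where "sv = l*(2*g+a)/4"
    define z where "z = k + l *\<^sub>R w + sv *\<^sub>R u"
    have key: "2* sv + sv^2 \<le> l*(1-l)*a"
    proof -
      have "l*(P - A) \<le> A" using lP l0 A0 by (simp add: algebra_simps)
      hence "l*((2*g+a)^2/16 + a) \<le> A" unfolding P_def by simp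
      hence "l*(l*((2*g+a)^2/16 + a)) \<le> l*A" using l0 by simp
      moreover have "sv^2 = l*l*((2*g+a)^2/16)" unfolding sv_def by (simp add: power2_eq_square)
      moreover have "l*(1-l)*a - 2 * sv = l*A - l*(l*a)" unfolding sv_def A_def by (simp add: algebra_simps)
      moreover have "l*(l*((2*g+a)^2/16 + a)) = l*l*((2*g+a)^2/16) + l*(l*a)" by (simp add: algebra_simps)
      ultimately show ?thesis by linarith
    qed
    have "z \<in> K"
      unfolding K
    proof
      fix x assume x: "x \<in> X"
      have xk: "dist x k \<le> 1" using k x K by auto
      have xy: "dist x y \<le> 1" using y x K by auto
      define c where "c = x - k"
      have nc: "norm c ^2 \<le> 1" using xk unfolding c_def dist_norm by (simp add: abs_square_le_1)
      have ncw: "norm (c - w) ^2 \<le> 1" using xy unfolding c_def w_def dist_norm by (simp add: abs_square_le_1)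
      have h1: "norm (c - l *\<^sub>R w)^2 \<le> 1 - l*(1-l)*a"
      proof -
        have "(1-l)*norm c^2 + l * norm (c - w)^2 \<le> (1-l)*1 + l*1"
          using nc ncw l0 l1 by (intro add_mono mult_left_mono) auto
        thus ?thesis unfolding norm_sq_comb a_def by simp
      qed
      have "l*(1-l)*a \<ge> 0" using l0 l1 a0 by simp
      hence "norm (c - l *\<^sub>R w)^2 \<le> 1" using h1 by simp
      hence nv: "norm (c - l *\<^sub>R w) \<le> 1" by (simp add: abs_square_le_1)
      have "\<bar>inner (c - l *\<^sub>R w) u\<bar> \<le> norm (c - l *\<^sub>R w) * norm u" by (rule Cauchy_Schwarz_ineq2)
      moreover have "norm (c - l *\<^sub>R w) * norm u \<le> 1" using nv u by simp
      ultimately have iv: "inner (c - l *\<^sub>R w) u \<ge> -1" by linarith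
      have sv0: "sv \<ge> 0" unfolding sv_def using l0 g0 a0 by simp
      have "norm (c - l *\<^sub>R w - sv *\<^sub>R u)^2 = norm (c - l *\<^sub>R w)^2 - 2 * sv * (inner (c - l *\<^sub>R w) u) + sv^2"
        using norm_sq_diff[of "c - l *\<^sub>R w" sv u] u by simp
      also have "\<dots> \<le> 1 - l*(1-l)*a + 2* sv + sv^2"
        using h1 iv sv0 mult_left_mono[OF iv sv0] by linarith
      also have "\<dots> \<le> 1" using key by simp
      finally have "norm (c - l *\<^sub>R w - sv *\<^sub>R u)^2 \<le> 1" .
      hence "norm (c - l *\<^sub>R w - sv *\<^sub>R u) \<le> 1" by (simp add: abs_square_le_1)
      moreover have "dist x z = norm (c - l *\<^sub>R w - sv *\<^sub>R u)"
        unfolding z_def c_def dist_norm by (simp add: algebra_simps)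
      ultimately show "z \<in> cball x 1" by simp
    qed
    moreover have "inner z u > inner k u"
    proof -
      have "inner z u = inner k u - l*g + sv" unfolding z_def g_def using u
        by (simp add: inner_add_left power2_norm_eq_inner[symmetric])
      moreover have "sv - l*g = l*(a - 2*g)/4" unfolding sv_def by (simp add: algebra_simps)
      moreover have "l*(a - 2*g)/4 > 0" using l0 A0 unfolding A_def by simp
      ultimately show ?thesis by linarith
    qed
    ultimately show False using mx by force
  qed
qed


lemma mem_mink_avg: "z \<in> mink_avg K L \<longleftrightarrow> (\<exists>a\<in>K. \<exists>b\<in>L. z = (1/2::real) *\<^sub>R (a + b))"
  unfolding mink_avg_def by auto

lemma convex_mink_avg:
  assumes "convex K" "convex L" shows "convex (mink_avg K L)"
  unfolding convex_def
proof (intro ballI allI impI)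
  fix x y :: 'a and p q :: real
  assume x: "x \<in> mink_avg K L" and y: "y \<in> mink_avg K L" and pq: "0 \<le> p" "0 \<le> q" "p + q = 1"
  obtain a b where ab: "a \<in> K" "b \<in> L" "x = (1/2::real) *\<^sub>R (a + b)" using x mem_mink_avg by blast
  obtain a' b' where ab': "a' \<in> K" "b' \<in> L" "y = (1/2::real) *\<^sub>R (a' + b')" using y mem_mink_avg by blast
  have "p *\<^sub>R a + q *\<^sub>R a' \<in> K" using assms(1) ab ab' pq unfolding convex_def by blast
  moreover have "p *\<^sub>R b + q *\<^sub>R b' \<in> L" using assms(2) ab ab' pq unfolding convex_def by blast
  moreover have "p *\<^sub>R x + q *\<^sub>R y = (1/2::real) *\<^sub>R ((p *\<^sub>R a + q *\<^sub>R a') + (p *\<^sub>R b + q *\<^sub>R b'))"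
    using ab ab' by (simp add: algebra_simps)
  ultimately show "p *\<^sub>R x + q *\<^sub>R y \<in> mink_avg K L" using mem_mink_avg by blast
qed

lemma compact_mink_avg:
  assumes "compact K" "compact L" shows "compact (mink_avg K L)"
  unfolding mink_avg_def by (intro compact_scaling compact_sums assms)

lemma mink_avg_S:
  fixes K L :: "'a::euclidean_space set"
  assumes K: "K \<in> ball_bodies" and L: "L \<in> ball_bodies"
  shows "mink_avg K L \<in> ball_bodies"
proof -
  obtain X where X: "K = (\<Inter>x\<in>X. cball x 1)" and cK: "convex_body K" using K unfolding ball_bodies_def by auto
  obtain Y where Y: "L = (\<Inter>x\<in>Y. cball x 1)" and cL: "convex_body L" using L unfolding ball_bodies_def by auto
  define M where "M = mink_avg K L"
  have cM: "compact M" using cK cL compact_mink_avg unfolding M_def convex_body_def by blast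
  have vM: "convex M" using cK cL convex_mink_avg unfolding M_def convex_body_def by blast
  have nM: "M \<noteq> {}"
  proof -
    obtain x y where "x \<in> K" "y \<in> L" using cK cL unfolding convex_body_def by blast
    hence "(1/2::real) *\<^sub>R (x + y) \<in> M" unfolding M_def mem_mink_avg by blast
    thus ?thesis by blast
  qed
  have "M = (\<Inter>c\<in>{c. M \<subseteq> cball c 1}. cball c 1)"
  proof
    show "M \<subseteq> (\<Inter>c\<in>{c. M \<subseteq> cball c 1}. cball c 1)" by blast
  next
    show "(\<Inter>c\<in>{c. M \<subseteq> cball c 1}. cball c 1) \<subseteq> M"
    proof
      fix p assume p: "p \<in> (\<Inter>c\<in>{c. M \<subseteq> cball c 1}. cball c 1)"
      show "p \<in> M"
      proof (rule ccontr)
        assume "p \<notin> M"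
        then obtain a b where ab: "inner a p < b" "\<forall>x\<in>M. inner a x > b"
          using separating_hyperplane_closed_point[OF vM compact_imp_closed[OF cM]] by blast
        have a0: "a \<noteq> 0"
        proof
          assume "a = 0"
          then show False using ab nM by auto
        qed
        define u where "u = - (1 / norm a) *\<^sub>R a"
        have nu: "norm u = 1" unfolding u_def using a0 by simp
        have sep: "inner x u < inner p u" if "x \<in> M" for x
        proof -
          have "inner a p < inner a x" using ab that by force
          moreover have "norm a > 0" using a0 by simp
          ultimately have "inner a p / norm a < inner a x / norm a" by (simp add: divide_strict_right_mono)
          thus ?thesis unfolding u_def by (simp add: inner_commute)
        qed
        have contu: "continuous_on S (\<lambda>y. inner y u)" for S :: "'a set" by (intro continuous_intros)
        obtain k where k: "k \<in> K" "\<forall>y\<in>K. inner y u \<le> inner k u"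
          using continuous_attains_sup[OF _ _ contu, of K] cK unfolding convex_body_def by blast
        obtain l where l: "l \<in> L" "\<forall>y\<in>L. inner y u \<le> inner l u"
          using continuous_attains_sup[OF _ _ contu, of L] cL unfolding convex_body_def by blast
        have sK: "K \<subseteq> cball (k - u) 1" by (rule supp_ball[OF X k(1) k(2) nu])
        have sL: "L \<subseteq> cball (l - u) 1" by (rule supp_ball[OF Y l(1) l(2) nu])
        define c where "c = (1/2::real) *\<^sub>R (k + l) - u"
        have "M \<subseteq> cball c 1"
        proof
          fix z assume "z \<in> M"
          then obtain x y where xy: "x \<in> K" "y \<in> L" "z = (1/2::real) *\<^sub>R (x + y)" unfolding M_def mem_mink_avg by blast
          have d1: "norm ((k - u) - x) \<le> 1" using sK xy by (auto simp: dist_norm)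
          have d2: "norm ((l - u) - y) \<le> 1" using sL xy by (auto simp: dist_norm)
          have "c - z = (1/2::real) *\<^sub>R (((k - u) - x) + ((l - u) - y))" unfolding c_def xy(3) by (simp add: algebra_simps flip: scaleR_add_left)
          hence "norm (c - z) = (1/2) * norm (((k - u) - x) + ((l - u) - y))" by simp
          also have "\<dots> \<le> (1/2) * (norm ((k - u) - x) + norm ((l - u) - y))"
            by (intro mult_left_mono norm_triangle_ineq) auto
          also have "\<dots> \<le> 1" using d1 d2 by simp
          finally show "z \<in> cball c 1" by (simp add: dist_norm)
        qed
        hence pc: "norm (p - c) \<le> 1" using p by (auto simp: dist_norm norm_minus_commute)
        have mid: "(1/2::real) *\<^sub>R (k + l) \<in> M" unfolding M_def mem_mink_avg using k l by blast
        have "inner (p - c) u = inner p u - inner ((1/2::real) *\<^sub>R (k + l)) u + 1"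
        proof -
          have "inner u u = 1" using nu by (simp add: norm_eq_1)
          thus ?thesis unfolding c_def by (simp add: inner_diff_left)
        qed
        hence "inner (p - c) u > 1" using sep[OF mid] by linarith
        moreover have "inner (p - c) u \<le> norm (p - c) * norm u" by (rule norm_cauchy_schwarz)
        ultimately show False using pc nu by simp
      qed
    qed
  qed
  then show ?thesis unfolding ball_bodies_def convex_body_def M_def using cM vM nM M_def by blast
qed

definition hs :: "'a::euclidean_space set \<Rightarrow> 'a set \<Rightarrow> real set" where
  "hs A B = {r. r > 0 \<and> (\<forall>x\<in>A. \<exists>y\<in>B. dist x y \<le> r) \<and> (\<forall>x\<in>B. \<exists>y\<in>A. dist x y \<le> r)}"

lemma mem_sumball: "(x::'a::real_normed_vector) \<in> {a + b | a b. a \<in> B \<and> b \<in> cball 0 r} \<longleftrightarrow> (\<exists>y\<in>B. dist x y \<le> r)"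
proof
  assume "x \<in> {a + b | a b. a \<in> B \<and> b \<in> cball 0 r}"
  then obtain a b where "x = a + b" "a \<in> B" "b \<in> cball 0 r" by blast
  moreover have "dist x a = norm b" using \<open>x = a + b\<close> by (simp add: dist_norm)
  moreover have "norm b \<le> r" using \<open>b \<in> cball 0 r\<close> by simp
  ultimately show "\<exists>y\<in>B. dist x y \<le> r" using \<open>a \<in> B\<close> by (intro bexI[of _ a]) auto
next
  assume "\<exists>y\<in>B. dist x y \<le> r"
  then obtain y where "y \<in> B" "dist x y \<le> r" by blast
  hence "x = y + (x - y) \<and> y \<in> B \<and> (x - y) \<in> cball 0 r" by (auto simp: dist_norm norm_minus_commute)
  thus "x \<in> {a + b | a b. a \<in> B \<and> b \<in> cball 0 r}" by blast
qed

lemma hd_hs: "hausdorff_distance A B = Inf (hs A B)"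
  unfolding hausdorff_distance_def hs_def subset_iff mem_sumball by (rule arg_cong[where f=Inf]) auto

lemma hs_sym: "hs A B = hs B A" unfolding hs_def by (intro Collect_cong) blast

lemma hd_sym: "hausdorff_distance A B = hausdorff_distance B A" unfolding hd_hs by (subst hs_sym) (rule refl)

lemma hs_mono: "r \<in> hs A B \<Longrightarrow> r \<le> s \<Longrightarrow> s \<in> hs A B"
proof -
  assume r: "r \<in> hs A B" and rs: "r \<le> s"
  have "(\<forall>x\<in>A. \<exists>y\<in>B. dist x y \<le> s)"
  proof
    fix x assume "x \<in> A"
    then obtain y where "y \<in> B" "dist x y \<le> r" using r unfolding hs_def by blast
    thus "\<exists>y\<in>B. dist x y \<le> s" using rs by (intro bexI[of _ y]) simp_all
  qed
  moreover have "(\<forall>x\<in>B. \<exists>y\<in>A. dist x y \<le> s)"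
  proof
    fix x assume "x \<in> B"
    then obtain y where "y \<in> A" "dist x y \<le> r" using r unfolding hs_def by blast
    thus "\<exists>y\<in>A. dist x y \<le> s" using rs by (intro bexI[of _ y]) simp_all
  qed
  moreover have "s > 0" using r rs unfolding hs_def by simp
  ultimately show ?thesis unfolding hs_def by blast
qed

lemma hs_ne:
  assumes "bounded A" "bounded B" "A \<noteq> {}" "B \<noteq> {}" shows "hs A B \<noteq> {}"
proof -
  obtain R where R: "\<forall>x\<in>A. norm x \<le> R" using assms(1) bounded_iff by blast
  obtain R' where R': "\<forall>x\<in>B. norm x \<le> R'" using assms(2) bounded_iff by blast
  obtain a b where ab: "a \<in> A" "b \<in> B" using assms by blast
  have R0: "R \<ge> 0" using R ab norm_ge_zero order_trans by blast
  have R0': "R' \<ge> 0" using R' ab norm_ge_zero order_trans by blast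
  have d: "dist x y \<le> R + R'" if "x \<in> A" "y \<in> B" for x y
  proof -
    have "dist x y \<le> norm x + norm y" unfolding dist_norm by (rule norm_triangle_ineq4)
    moreover have "norm x \<le> R" using R that by blast
    moreover have "norm y \<le> R'" using R' that by blast
    ultimately show ?thesis by linarith
  qed
  have "\<forall>x\<in>A. \<exists>y\<in>B. dist x y \<le> R + R' + 1"
  proof
    fix x assume "x \<in> A"
    hence "dist x b \<le> R + R'" using d ab by blast
    thus "\<exists>y\<in>B. dist x y \<le> R + R' + 1" using ab by (intro bexI[of _ b]) auto
  qed
  moreover have "\<forall>x\<in>B. \<exists>y\<in>A. dist x y \<le> R + R' + 1"
  proof
    fix x assume "x \<in> B"
    hence "dist a x \<le> R + R'" using d ab by blast
    hence "dist x a \<le> R + R'" by (simp add: dist_commute)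
    thus "\<exists>y\<in>A. dist x y \<le> R + R' + 1" using ab by (intro bexI[of _ a]) auto
  qed
  ultimately have "R + R' + 1 \<in> hs A B" unfolding hs_def using R0 R0' by simp
  thus ?thesis by blast
qed

lemma hs_bdd: "bdd_below (hs A B)"
  by (rule bdd_belowI[of _ 0]) (simp add: hs_def)

lemma hd_lower: "r \<in> hs A B \<Longrightarrow> hausdorff_distance A B \<le> r"
  unfolding hd_hs by (rule cInf_lower[OF _ hs_bdd])

lemma hd_nonneg: "hs A B \<noteq> {} \<Longrightarrow> 0 \<le> hausdorff_distance A B"
  unfolding hd_hs by (rule cInf_greatest) (simp_all add: hs_def)

lemma hd_gt: assumes "hs A B \<noteq> {}" "hausdorff_distance A B < r" shows "r \<in> hs A B"
proof -
  have "Inf (hs A B) < r" using assms(2) unfolding hd_hs .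
  then obtain x where "x \<in> hs A B" "x < r" using cInf_less_iff[OF assms(1) hs_bdd] by blast
  thus ?thesis using hs_mono less_imp_le by blast
qed

lemma hs_trans: "r \<in> hs A B \<Longrightarrow> s \<in> hs B C \<Longrightarrow> r + s \<in> hs A C"
proof -
  assume r: "r \<in> hs A B" and s: "s \<in> hs B C"
  have "\<forall>x\<in>A. \<exists>z\<in>C. dist x z \<le> r + s"
  proof
    fix x assume "x \<in> A"
    then obtain y where y: "y \<in> B" "dist x y \<le> r" using r unfolding hs_def by blast
    then obtain z where z: "z \<in> C" "dist y z \<le> s" using s unfolding hs_def by blast
    have "dist x z \<le> dist x y + dist y z" by (rule dist_triangle)
    thus "\<exists>z\<in>C. dist x z \<le> r + s" using y z by (intro bexI[of _ z]) auto
  qed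
  moreover have "\<forall>x\<in>C. \<exists>z\<in>A. dist x z \<le> r + s"
  proof
    fix x assume "x \<in> C"
    then obtain y where y: "y \<in> B" "dist x y \<le> s" using s unfolding hs_def by blast
    then obtain z where z: "z \<in> A" "dist y z \<le> r" using r unfolding hs_def by blast
    have "dist x z \<le> dist x y + dist y z" by (rule dist_triangle)
    thus "\<exists>z\<in>A. dist x z \<le> r + s" using y z by (intro bexI[of _ z]) auto
  qed
  moreover have "r + s > 0" using r s unfolding hs_def by simp
  ultimately show ?thesis unfolding hs_def by blast
qed

definition bod :: "'a::euclidean_space set \<Rightarrow> bool" where
  "bod A \<longleftrightarrow> bounded A \<and> A \<noteq> {}"

lemma hd_triangle:
  assumes "bod A" "bod B" "bod C"
  shows "hausdorff_distance A C \<le> hausdorff_distance A B + hausdorff_distance B C"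
proof (rule dense_ge)
  fix t assume t: "hausdorff_distance A B + hausdorff_distance B C < t"
  define e where "e = (t - hausdorff_distance A B - hausdorff_distance B C)/2"
  have e: "e > 0" using t e_def by simp
  have "hausdorff_distance A B + e \<in> hs A B" using assms e by (intro hd_gt hs_ne) (auto simp: bod_def)
  moreover have "hausdorff_distance B C + e \<in> hs B C" using assms e by (intro hd_gt hs_ne) (auto simp: bod_def)
  ultimately have "hausdorff_distance A B + e + (hausdorff_distance B C + e) \<in> hs A C" by (rule hs_trans)
  hence "hausdorff_distance A C \<le> hausdorff_distance A B + e + (hausdorff_distance B C + e)" by (rule hd_lower)
  thus "hausdorff_distance A C \<le> t" unfolding e_def by simp
qed

lemma hs_mid:
  assumes "convex K0" "r \<in> hs K0 K1" shows "r/2 \<in> hs K0 (mink_avg K0 K1)"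
  unfolding hs_def
proof (intro CollectI conjI ballI)
  show "r/2 > 0" using assms(2) by (simp add: hs_def)
next
  fix x assume x: "x \<in> K0"
  then obtain y where y: "y \<in> K1" "dist x y \<le> r" using assms(2) by (auto simp: hs_def)
  have "(1/2::real) *\<^sub>R (x + y) \<in> mink_avg K0 K1" using x y mem_mink_avg by blast
  moreover have "dist x ((1/2::real) *\<^sub>R (x + y)) = dist x y / 2"
  proof -
    have "x - (1/2::real) *\<^sub>R (x + y) = (1/2::real) *\<^sub>R (x - y)" by (simp add: algebra_simps flip: scaleR_add_left)
    thus ?thesis by (simp add: dist_norm)
  qed
  ultimately show "\<exists>z\<in>mink_avg K0 K1. dist x z \<le> r/2" using y by force
next
  fix z assume "z \<in> mink_avg K0 K1"
  then obtain a b where ab: "a \<in> K0" "b \<in> K1" "z = (1/2::real) *\<^sub>R (a + b)" using mem_mink_avg by blast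
  then obtain x where x: "x \<in> K0" "dist b x \<le> r" using assms(2) by (auto simp: hs_def)
  have "(1/2::real) *\<^sub>R a + (1/2::real) *\<^sub>R x \<in> K0" using assms(1) ab x unfolding convex_def by force
  moreover have "dist z ((1/2::real) *\<^sub>R a + (1/2::real) *\<^sub>R x) = dist b x / 2"
  proof -
    have "z - ((1/2::real) *\<^sub>R a + (1/2::real) *\<^sub>R x) = (1/2::real) *\<^sub>R (b - x)" unfolding ab(3) by (simp add: algebra_simps)
    thus ?thesis by (simp add: dist_norm)
  qed
  ultimately show "\<exists>y\<in>K0. dist z y \<le> r/2" using x by force
qed

lemma mink_avg_comm: "mink_avg K L = mink_avg L K"
proof -
  have "{a + b | a b. a \<in> K \<and> b \<in> L} = {a + b | a b. a \<in> L \<and> b \<in> K}"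
    by auto (metis add.commute)+
  thus ?thesis unfolding mink_avg_def by simp
qed

lemma hd_mid_le:
  assumes "convex K0" "bod K0" "bod K1"
  shows "hausdorff_distance K0 (mink_avg K0 K1) \<le> hausdorff_distance K0 K1 / 2"
proof (rule dense_ge)
  fix t assume t: "hausdorff_distance K0 K1 / 2 < t"
  have "2*t \<in> hs K0 K1" using assms t by (intro hd_gt hs_ne) (auto simp: bod_def)
  hence "(2*t)/2 \<in> hs K0 (mink_avg K0 K1)" by (rule hs_mid[OF assms(1)])
  thus "hausdorff_distance K0 (mink_avg K0 K1) \<le> t" using hd_lower by force
qed

lemma bod_S: "K \<in> ball_bodies \<Longrightarrow> bod K"
  unfolding ball_bodies_def convex_body_def bod_def by (auto intro: compact_imp_bounded)

lemma hd_mid: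
  assumes "K0 \<in> ball_bodies" "K1 \<in> ball_bodies"
  shows "hausdorff_distance K0 (mink_avg K0 K1) = hausdorff_distance K0 K1 / 2 \<and>
         hausdorff_distance K1 (mink_avg K0 K1) = hausdorff_distance K0 K1 / 2"
proof -
  have M: "mink_avg K0 K1 \<in> ball_bodies" using mink_avg_S assms by blast
  have c0: "convex K0" and c1: "convex K1" using assms unfolding ball_bodies_def convex_body_def by auto
  have b: "bod K0" "bod K1" "bod (mink_avg K0 K1)" using assms M bod_S by auto
  have l0: "hausdorff_distance K0 (mink_avg K0 K1) \<le> hausdorff_distance K0 K1 / 2"
    using hd_mid_le c0 b by blast
  have l1: "hausdorff_distance K1 (mink_avg K0 K1) \<le> hausdorff_distance K0 K1 / 2"
    using hd_mid_le[OF c1 b(2) b(1)] by (simp add: mink_avg_comm hd_sym)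
  have "hausdorff_distance K0 K1 \<le> hausdorff_distance K0 (mink_avg K0 K1) + hausdorff_distance (mink_avg K0 K1) K1"
    using hd_triangle b by blast
  thus ?thesis using l0 l1 hd_sym[of "mink_avg K0 K1" K1] by linarith
qed

theorem lemma4:
  fixes T :: "'a::euclidean_space set \<Rightarrow> 'a set"
    and K0 K1 :: "'a set"
  assumes "bij_betw T ball_bodies ball_bodies"
    and "\<forall>K\<in>ball_bodies. \<forall>L\<in>ball_bodies. hausdorff_distance (T K) (T L) = hausdorff_distance K L"
    and "cute_pair K0 K1"
  shows "cute_pair (T K0) (T K1) \<and> T (mink_avg K0 K1) = mink_avg (T K0) (T K1)"
proof -
  let ?S = "ball_bodies :: 'a set set"
  let ?d = "hausdorff_distance :: 'a set \<Rightarrow> 'a set \<Rightarrow> real"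
  have K0: "K0 \<in> ?S" and K1: "K1 \<in> ?S" and cu: "\<forall>M\<in>?S. (?d K0 M = ?d K0 K1 / 2 \<and> ?d K1 M = ?d K0 K1 / 2) \<longleftrightarrow> M = mink_avg K0 K1"
    using assms(3) unfolding cute_pair_def by auto
  have TS: "T K \<in> ?S" if "K \<in> ?S" for K using assms(1) that bij_betwE by blast
  have inj: "T K = T L \<longleftrightarrow> K = L" if "K \<in> ?S" "L \<in> ?S" for K L
    using assms(1) that unfolding bij_betw_def inj_on_def by blast
  have surj: "\<exists>M\<in>?S. M' = T M" if "M' \<in> ?S" for M' using assms(1) that unfolding bij_betw_def by blast
  have iso: "?d (T K) (T L) = ?d K L" if "K \<in> ?S" "L \<in> ?S" for K L using assms(2) that by blast
  define A where "A = mink_avg K0 K1"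
  define A' where "A' = mink_avg (T K0) (T K1)"
  have AS: "A \<in> ?S" unfolding A_def using mink_avg_S K0 K1 by blast
  have A'S: "A' \<in> ?S" unfolding A'_def using mink_avg_S TS K0 K1 by blast
  have eq: "(?d (T K0) (T M) = ?d (T K0) (T K1) / 2 \<and> ?d (T K1) (T M) = ?d (T K0) (T K1) / 2) \<longleftrightarrow> T M = T A"
    if M: "M \<in> ?S" for M
    using cu M iso[OF K0 M] iso[OF K1 M] iso[OF K0 K1] inj[OF M AS] unfolding A_def by simp
  obtain M where M: "M \<in> ?S" "A' = T M" using surj A'S by blast
  have "?d (T K0) A' = ?d (T K0) (T K1) / 2 \<and> ?d (T K1) A' = ?d (T K0) (T K1) / 2"
    unfolding A'_def using hd_mid TS K0 K1 by blast
  hence TA: "T A = A'" using eq[OF M(1)] M(2) by simp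
  have "cute_pair (T K0) (T K1)"
    unfolding cute_pair_def
  proof (intro conjI TS K0 K1 ballI)
    fix M' assume M': "M' \<in> ?S"
    then obtain M where M: "M \<in> ?S" "M' = T M" using surj by blast
    show "(?d (T K0) M' = ?d (T K0) (T K1) / 2 \<and> ?d (T K1) M' = ?d (T K0) (T K1) / 2) \<longleftrightarrow> M' = mink_avg (T K0) (T K1)"
      using eq[OF M(1)] M(2) TA unfolding A'_def by simp
  qed
  thus ?thesis using TA unfolding A_def A'_def by simp
qed

end
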